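(* Consider ${\rm CHC}_D(\mathbf k,\mathbf n,\lambda)$ under regime (A1) and the test $\psi^c=\psi_{sum}\vee\psi_{max}$ with threshold $W\to\infty$. If either (i) $\dfrac{\lambda\prod_ik_i}{\sqrt{\prod_in_i}}\to\infty$ and $W\le c\,\lambda\dfrac{\prod_ik_i}{\sqrt{\prod_in_i}}$ for some fixed $0<c<1$; or (ii) $\liminf\dfrac{\lambda}{\sqrt{2\sum_{i=1}^d\log n_i}}>1$, then $\mathbb P_0(\psi^c=1)+\sup_{\mathcal X\in\mathscr X_{\rm CHC}(\mathbf k,\mathbf n,\lambda)}\mathbb P_{\mathcal X}(\psi^c=0)\to0$. Under regime (A2) (with a suitable choice of $W$), $\psi^c$ achieves reliable detection when $\beta<(d\alpha-d/2)\vee0$.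
   Context: Model: $\mathcal Y=\mathcal X+\mathcal Z\in\mathbb R^{n_1\times\cdots\times n_d}$, $\mathcal Z$ i.i.d. $N(0,1)$; ${\rm CHC}_D$ tests $H_0:\mathcal X=0$ vs $H_1:\mathcal X\in\mathscr X_{\rm CHC}(\mathbf k,\mathbf n,\lambda)=\{\lambda'\mathbf 1_{I_1}\circ\cdots\circ\mathbf 1_{I_d}:|I_i|=k_i,\lambda'\ge\lambda\}$. $\psi_{sum}=\mathbf 1\big(\sum_{i_1,\dots,i_d}\mathcal Y_{[i_1,\dots,i_d]}/\sqrt{n_1\cdots n_d}>W\big)$; $\psi_{max}=\mathbf 1\big(\max_{i_1,\dots,i_d}\mathcal Y_{[i_1,\dots,i_d]}>\sqrt{2\sum_{i=1}^d\log n_i}\big)$. Regime (A1): $n_i\to\infty,k_i\to\infty,k_i/n_i\to0$ for all $i$. Regime (A2): fixed $\alpha\in[0,1],\beta\in\mathbb R$; $n\to\infty$, $\log n_i/\log n\to1$, $k_i=k$ with $\log k/\log n\to\alpha$, $\log(1/\lambda)/\log n\to\beta$. *)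

theory Defs
  imports "HOL-Probability.Probability"
begin

text \<open>Order-d tensors of size n_0 x ... x n_(d-1) are real functions on the index set
  of multi-indices idx with idx i < n i for i < d (extensional outside {..<d}).\<close>

definition tensor_idx :: "nat \<Rightarrow> (nat \<Rightarrow> nat) \<Rightarrow> (nat \<Rightarrow> nat) set" where
  "tensor_idx d n = PiE {..<d} (\<lambda>i. {..<n i})"

definition gauss_tensor :: "nat \<Rightarrow> (nat \<Rightarrow> nat) \<Rightarrow> ((nat \<Rightarrow> nat) \<Rightarrow> real) measure" where
  "gauss_tensor d n = PiM (tensor_idx d n) (\<lambda>_. density lborel std_normal_density)"

definition chc_class :: "nat \<Rightarrow> (nat \<Rightarrow> nat) \<Rightarrow> (nat \<Rightarrow> nat) \<Rightarrow> real \<Rightarrow> ((nat \<Rightarrow> nat) \<Rightarrow> real) set" where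
  "chc_class d k n lam = {X. \<exists>S lam'. lam' \<ge> lam \<and>
      (\<forall>i<d. S i \<subseteq> {..<n i} \<and> card (S i) = k i) \<and>
      X = (\<lambda>idx. if (\<forall>i<d. idx i \<in> S i) then lam' else 0)}"

definition psi_sum :: "nat \<Rightarrow> (nat \<Rightarrow> nat) \<Rightarrow> real \<Rightarrow> ((nat \<Rightarrow> nat) \<Rightarrow> real) \<Rightarrow> bool" where
  "psi_sum d n W Y \<longleftrightarrow>
     (\<Sum>idx\<in>tensor_idx d n. Y idx) / sqrt (\<Prod>i<d. real (n i)) > W"

definition psi_max :: "nat \<Rightarrow> (nat \<Rightarrow> nat) \<Rightarrow> ((nat \<Rightarrow> nat) \<Rightarrow> real) \<Rightarrow> bool" where
  "psi_max d n Y \<longleftrightarrow>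
     Max (Y ` tensor_idx d n) > sqrt (2 * (\<Sum>i<d. ln (real (n i))))"

definition psi_c :: "nat \<Rightarrow> (nat \<Rightarrow> nat) \<Rightarrow> real \<Rightarrow> ((nat \<Rightarrow> nat) \<Rightarrow> real) \<Rightarrow> bool" where
  "psi_c d n W Y \<longleftrightarrow> psi_sum d n W Y \<or> psi_max d n Y"

text \<open>Risk: P_0(psi^c = 1) + sup over the alternative class of P_X(psi^c = 0),
  where under P_X the observation is Y = X + Z.\<close>
definition chc_risk :: "nat \<Rightarrow> (nat \<Rightarrow> nat) \<Rightarrow> (nat \<Rightarrow> nat) \<Rightarrow> real \<Rightarrow> real \<Rightarrow> real" where
  "chc_risk d k n lam W =
     measure (gauss_tensor d n) {Z \<in> space (gauss_tensor d n). psi_c d n W Z}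
   + Sup ((\<lambda>X. measure (gauss_tensor d n)
              {Z \<in> space (gauss_tensor d n). \<not> psi_c d n W (\<lambda>idx. X idx + Z idx)})
          ` chc_class d k n lam)"

text \<open>Regime (A1), for sequences indexed by m: n i m, k i m.\<close>
definition regime_A1 :: "nat \<Rightarrow> (nat \<Rightarrow> nat \<Rightarrow> nat) \<Rightarrow> (nat \<Rightarrow> nat \<Rightarrow> nat) \<Rightarrow> bool" where
  "regime_A1 d n k \<longleftrightarrow> (\<forall>i<d.
      filterlim (\<lambda>m. real (n i m)) at_top sequentially \<and>
      filterlim (\<lambda>m. real (k i m)) at_top sequentially \<and>
      ((\<lambda>m. real (k i m) / real (n i m)) \<longlongrightarrow> 0) sequentially)"

text \<open>Regime (A2), with N the reference size n, common size k, signal lam.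
  Implicit model constraints 1 <= k <= n_i and lam > 0 are included.\<close>
definition regime_A2 :: "nat \<Rightarrow> real \<Rightarrow> real \<Rightarrow> (nat \<Rightarrow> nat) \<Rightarrow> (nat \<Rightarrow> nat \<Rightarrow> nat)
     \<Rightarrow> (nat \<Rightarrow> nat) \<Rightarrow> (nat \<Rightarrow> real) \<Rightarrow> bool" where
  "regime_A2 d \<alpha> \<beta> N n k lam \<longleftrightarrow>
      filterlim (\<lambda>m. real (N m)) at_top sequentially \<and>
      (\<forall>i<d. ((\<lambda>m. ln (real (n i m)) / ln (real (N m))) \<longlongrightarrow> 1) sequentially) \<and>
      ((\<lambda>m. ln (real (k m)) / ln (real (N m))) \<longlongrightarrow> \<alpha>) sequentially \<and>
      ((\<lambda>m. ln (1 / lam m) / ln (real (N m))) \<longlongrightarrow> \<beta>) sequentially \<and>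
      (\<forall>m. 1 \<le> k m \<and> (\<forall>i<d. k m \<le> n i m) \<and> 0 < lam m)"

end

theory Submission
  imports Defs "HOL-Real_Asymp.Real_Asymp"
begin


lemma std_normal_deriv:
  "s \<noteq> 0 \<Longrightarrow> ((\<lambda>x. - std_normal_density x / s) has_real_derivative (x * std_normal_density x / s)) (at x)"
  unfolding std_normal_density_def
  by (auto intro!: derivative_eq_intros simp: field_simps)

lemma tail_upper_enn:
  assumes M: "prob_space M" and D: "distributed M lborel X (\<lambda>x. ennreal (std_normal_density x))"
    and s: "0 < s"
  shows "emeasure M {\<omega>\<in>space M. s \<le> X \<omega>} \<le> ennreal (std_normal_density s / s)"
proof -
  have "{\<omega>\<in>space M. s \<le> X \<omega>} = X -` {s..} \<inter> space M" by auto
  then have "emeasure M {\<omega>\<in>space M. s \<le> X \<omega>} = (\<integral>\<^sup>+x. ennreal (std_normal_density x) * indicator {s..} x \<partial>lborel)"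
    using distributed_emeasure[OF D, of "{s..}"] by simp
  also have "\<dots> \<le> (\<integral>\<^sup>+x. ennreal (x * std_normal_density x / s) * indicator {s..} x \<partial>lborel)"
  proof (intro nn_integral_mono)
    fix x :: real
    show "ennreal (std_normal_density x) * indicator {s..} x \<le> ennreal (x * std_normal_density x / s) * indicator {s..} x"
    proof (cases "s \<le> x")
      case True
      have "std_normal_density x \<le> x * std_normal_density x / s"
        using True s by (simp add: field_simps mult_right_mono)
      then show ?thesis using True by (simp add: ennreal_leI)
    qed simp
  qed
  also have "\<dots> = ennreal (0 - (- std_normal_density s / s))"
  proof (rule nn_integral_FTC_atLeast[where F="\<lambda>x. - std_normal_density x / s" and T=0])
    show "(\<lambda>x. x * std_normal_density x / s) \<in> borel_measurable borel" by measurable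
    show "\<And>x. s \<le> x \<Longrightarrow> ((\<lambda>x. - std_normal_density x / s) has_real_derivative (x * std_normal_density x / s)) (at x)"
      using s std_normal_deriv[of s] by force
    show "\<And>x. s \<le> x \<Longrightarrow> 0 \<le> x * std_normal_density x / s" using s by simp
    have "((\<lambda>x. std_normal_density x) \<longlongrightarrow> 0) at_top"
      unfolding std_normal_density_def
      by real_asymp
    then show "((\<lambda>x. - std_normal_density x / s) \<longlongrightarrow> 0) at_top"
      using s by (auto intro!: tendsto_eq_intros)
  qed
  finally show ?thesis by simp
qed

lemma tail_upper:
  assumes M: "prob_space M" and D: "distributed M lborel X (\<lambda>x. ennreal (std_normal_density x))"
    and s: "0 < s"
  shows "measure M {\<omega>\<in>space M. s \<le> X \<omega>} \<le> exp (- s\<^sup>2 / 2) / s"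
proof -
  interpret prob_space M by (rule M)
  have "ennreal (measure M {\<omega>\<in>space M. s \<le> X \<omega>}) \<le> ennreal (std_normal_density s / s)"
    using tail_upper_enn[OF M D s] by (simp add: emeasure_eq_measure)
  then have "measure M {\<omega>\<in>space M. s \<le> X \<omega>} \<le> std_normal_density s / s"
    using s by (subst (asm) ennreal_le_iff) auto
  also have "\<dots> \<le> exp (- s\<^sup>2 / 2) / s"
  proof -
    have "1 / sqrt (2 * pi) \<le> 1" using pi_gt3 by (simp add: divide_le_eq_1 real_less_rsqrt)
    then have "exp (- s\<^sup>2 / 2) * (1 / sqrt (2 * pi)) \<le> exp (- s\<^sup>2 / 2) * 1"
      by (intro mult_left_mono) auto
    then have "std_normal_density s \<le> exp (- s\<^sup>2 / 2)"
      unfolding std_normal_density_def by simp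
    then show ?thesis using s by (simp add: divide_right_mono)
  qed
  finally show ?thesis .
qed

lemma tail_lower:
  assumes M: "prob_space M" and D: "distributed M lborel X (\<lambda>x. ennreal (std_normal_density x))"
    and s: "0 < s"
  shows "measure M {\<omega>\<in>space M. X \<omega> \<le> - s} \<le> exp (- s\<^sup>2 / 2) / s"
proof -
  have D': "distributed M lborel (\<lambda>x. - X x) (\<lambda>x. ennreal (std_normal_density x))"
    using prob_space.normal_density_affine[OF M D, where \<alpha>="-1" and \<beta>=0] by simp
  have "{\<omega>\<in>space M. X \<omega> \<le> - s} = {\<omega>\<in>space M. s \<le> - X \<omega>}" by auto
  then show ?thesis using tail_upper[OF M D' s] by simp
qed

abbreviation G :: "real measure" where "G \<equiv> density lborel std_normal_density"

lemma prob_G: "prob_space G" by (rule prob_space_normal_density) simp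

lemma sets_G[simp]: "sets G = sets borel" by simp

lemma comp_dist:
  assumes "i \<in> I"
  shows "distributed (PiM I (\<lambda>_. G)) lborel (\<lambda>Z. Z i) (\<lambda>x. ennreal (std_normal_density x))"
  unfolding distributed_def
proof (intro conjI)
  have "distr (PiM I (\<lambda>_. G)) lborel (\<lambda>Z. Z i) = distr (PiM I (\<lambda>_. G)) G (\<lambda>Z. Z i)"
    by (rule distr_cong) auto
  also have "\<dots> = G"
    using distr_PiM_component[of I "\<lambda>_. G" i] prob_G assms by simp
  finally show "distr (PiM I (\<lambda>_. G)) lborel (\<lambda>Z. Z i) = density lborel (\<lambda>x. ennreal (std_normal_density x))" .
  show "(\<lambda>x. ennreal (std_normal_density x)) \<in> borel_measurable lborel" by simp
  have "(\<lambda>Z. Z i) \<in> measurable (PiM I (\<lambda>_. G)) G"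
    using assms by (rule measurable_component_singleton)
  then show "(\<lambda>Z. Z i) \<in> measurable (PiM I (\<lambda>_. G)) lborel"
    by (simp add: measurable_def)
qed

lemma indep_comp:
  assumes "I \<noteq> {}"
  shows "prob_space.indep_vars (PiM I (\<lambda>_. G)) (\<lambda>_. borel) (\<lambda>i Z. Z i) I"
proof -
  interpret P: product_prob_space "\<lambda>_. G" I
    by (intro product_prob_spaceI) (rule prob_G)
  have rv: "\<And>i. i \<in> I \<Longrightarrow> (\<lambda>Z. Z i) \<in> measurable (PiM I (\<lambda>_. G)) borel"
  proof -
    fix i assume "i \<in> I"
    then have "(\<lambda>Z. Z i) \<in> measurable (PiM I (\<lambda>_. G)) G" by (rule measurable_component_singleton)
    then show "(\<lambda>Z. Z i) \<in> measurable (PiM I (\<lambda>_. G)) borel" by (simp add: measurable_def)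
  qed
  have "distr (PiM I (\<lambda>_. G)) (PiM I (\<lambda>_. borel)) (\<lambda>x. \<lambda>i\<in>I. x i)
      = distr (PiM I (\<lambda>_. G)) (PiM I (\<lambda>_. borel)) (\<lambda>x. x)"
  proof (rule distr_cong[OF refl refl])
    fix x assume "x \<in> space (PiM I (\<lambda>_. G))"
    then have "x \<in> extensional I" by (simp add: space_PiM PiE_iff)
    then show "restrict x I = x" by (rule extensional_restrict)
  qed
  also have "\<dots> = PiM I (\<lambda>_. G)"
    by (rule distr_id2, rule sets_PiM_cong) simp_all
  also have "\<dots> = PiM I (\<lambda>i. distr (PiM I (\<lambda>_. G)) borel (\<lambda>Z. Z i))"
  proof (rule PiM_cong)
    fix i assume "i \<in> I"
    have "distr (PiM I (\<lambda>_. G)) borel (\<lambda>Z. Z i) = distr (PiM I (\<lambda>_. G)) G (\<lambda>Z. Z i)"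
      by (rule distr_cong) auto
    also have "\<dots> = G"
      using distr_PiM_component[of I "\<lambda>_. G" i] prob_G \<open>i \<in> I\<close> by simp
    finally show "G = distr (PiM I (\<lambda>_. G)) borel (\<lambda>Z. Z i)" by simp
  qed simp
  finally have calc: "distr (PiM I (\<lambda>_. G)) (PiM I (\<lambda>_. borel)) (\<lambda>x. \<lambda>i\<in>I. x i)
      = PiM I (\<lambda>i. distr (PiM I (\<lambda>_. G)) borel (\<lambda>Z. Z i))" .
  show ?thesis
    by (rule iffD2[OF P.indep_vars_iff_distr_eq_PiM'[OF assms rv] calc])
qed

lemma sum_dist:
  assumes "finite I" "I \<noteq> {}"
  shows "distributed (PiM I (\<lambda>_. G)) lborel (\<lambda>Z. (\<Sum>i\<in>I. Z i) / sqrt (real (card I)))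
           (\<lambda>x. ennreal (std_normal_density x))"
proof -
  interpret P: product_prob_space "\<lambda>_. G" I
    by (intro product_prob_spaceI) (rule prob_G)
  have "distributed (PiM I (\<lambda>_. G)) lborel (\<lambda>Z. \<Sum>i\<in>I. Z i)
          (\<lambda>x. ennreal (normal_density (\<Sum>i\<in>I. 0) (sqrt (\<Sum>i\<in>I. 1\<^sup>2)) x))"
    by (rule P.sum_indep_normal[OF assms indep_comp[OF assms(2)]]) (auto intro: comp_dist)
  then have "distributed (PiM I (\<lambda>_. G)) lborel (\<lambda>Z. \<Sum>i\<in>I. Z i)
          (\<lambda>x. ennreal (normal_density 0 (sqrt (real (card I))) x))"
    by simp
  moreover have pos: "0 < sqrt (real (card I))" using assms by (simp add: card_gt_0_iff)
  ultimately have "distributed (PiM I (\<lambda>_. G)) lborel (\<lambda>x. ((\<Sum>i\<in>I. x i) - 0) / sqrt (real (card I)))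
          (\<lambda>x. ennreal (std_normal_density x))"
    using P.normal_standard_normal_convert[OF pos, of "\<lambda>Z. \<Sum>i\<in>I. Z i" 0] by blast
  then show ?thesis by simp
qed

lemma sets_ge:
  fixes X :: "'a \<Rightarrow> real"
  assumes "X \<in> measurable M lborel"
  shows "{\<omega>\<in>space M. t \<le> X \<omega>} \<in> sets M"
proof -
  have "{\<omega>\<in>space M. t \<le> X \<omega>} = X -` {t..} \<inter> space M" by auto
  also have "\<dots> \<in> sets M" by (rule measurable_sets[OF assms]) (simp add: atLeast_borel atMost_borel)
  finally show ?thesis .
qed

lemma sets_le:
  fixes X :: "'a \<Rightarrow> real"
  assumes "X \<in> measurable M lborel"
  shows "{\<omega>\<in>space M. X \<omega> \<le> t} \<in> sets M"
proof -
  have "{\<omega>\<in>space M. X \<omega> \<le> t} = X -` {..t} \<inter> space M" by auto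
  also have "\<dots> \<in> sets M" by (rule measurable_sets[OF assms]) (simp add: atLeast_borel atMost_borel)
  finally show ?thesis .
qed

lemma gt_eq: "gauss_tensor d n = PiM (tensor_idx d n) (\<lambda>_. G)"
  by (simp add: gauss_tensor_def)

lemma fin_I: "finite (tensor_idx d n)"
  by (simp add: tensor_idx_def finite_PiE)

lemma card_I: "card (tensor_idx d n) = (\<Prod>i<d. n i)"
  by (simp add: tensor_idx_def card_PiE)

lemma ne_I: assumes "\<forall>i<d. 1 \<le> n i" shows "tensor_idx d n \<noteq> {}"
proof -
  have "\<forall>i\<in>{..<d}. (0::nat) \<in> {..<n i}" using assms by auto
  then show ?thesis unfolding tensor_idx_def PiE_eq_empty_iff by blast
qed

lemma prob_P: "prob_space (gauss_tensor d n)"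
  unfolding gt_eq by (rule prob_space_PiM) (rule prob_G)

lemma sqrt_card_I: "sqrt (\<Prod>i<d. real (n i)) = sqrt (real (card (tensor_idx d n)))"
  by (simp add: card_I)

lemma tail_bound_simple:
  assumes "0 < (s::real)" shows "exp (- s\<^sup>2 / 2) / s \<le> 1 / s"
  using assms by (intro divide_right_mono) auto

lemma h0_bound:
  assumes n1: "\<forall>i<d. 1 \<le> n i" and NN: "2 \<le> (\<Prod>i<d. n i)" and W: "0 < W"
  shows "measure (gauss_tensor d n) {Z \<in> space (gauss_tensor d n). psi_c d n W Z}
        \<le> 1 / W + 1 / sqrt (2 * (\<Sum>i<d. ln (real (n i))))"
proof -
  define I where "I = tensor_idx d n"
  define P where "P = gauss_tensor d n"
  define t where "t = sqrt (2 * (\<Sum>i<d. ln (real (n i))))"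
  have P: "P = PiM I (\<lambda>_. G)" by (simp add: P_def I_def gt_eq)
  have finI: "finite I" by (simp add: I_def fin_I)
  have neI: "I \<noteq> {}" using n1 by (simp add: I_def ne_I)
  interpret prob_space P unfolding P_def by (rule prob_P)
  have "(2::real) \<le> real (\<Prod>i<d. n i)" using NN by (metis of_nat_le_iff of_nat_numeral)
  moreover have "card I = (\<Prod>i<d. n i)" by (simp add: I_def card_I)
  ultimately have cardge: "2 \<le> real (card I)" by simp
  have lnsum: "(\<Sum>i<d. ln (real (n i))) = ln (real (card I))"
  proof -
    have "real (card I) = (\<Prod>i<d. real (n i))" by (simp add: I_def card_I)
    then have "ln (real (card I)) = ln (\<Prod>i<d. real (n i))" by simp
    also have "\<dots> = (\<Sum>i<d. ln (real (n i)))" using n1 by (subst ln_prod) auto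
    finally show ?thesis by simp
  qed
  have lnpos: "0 < ln (real (card I))" using cardge by simp
  have tpos: "0 < t" unfolding t_def lnsum using lnpos by simp
  have t2: "t\<^sup>2 = 2 * ln (real (card I))" unfolding t_def lnsum using lnpos by simp
  have texp: "exp (- t\<^sup>2 / 2) = 1 / real (card I)"
    unfolding t2 using cardge by (simp add: exp_minus inverse_eq_divide)
  define X where "X = (\<lambda>Z::(nat \<Rightarrow> nat) \<Rightarrow> real. (\<Sum>idx\<in>I. Z idx) / sqrt (real (card I)))"
  have DX: "distributed P lborel X (\<lambda>x. ennreal (std_normal_density x))"
    unfolding P X_def by (rule sum_dist[OF finI neI])
  have Dc: "\<And>idx. idx \<in> I \<Longrightarrow> distributed P lborel (\<lambda>Z. Z idx) (\<lambda>x. ennreal (std_normal_density x))"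
    unfolding P by (rule comp_dist)
  define A where "A = {Z \<in> space P. W \<le> X Z}"
  define B where "B = (\<Union>idx\<in>I. {Z \<in> space P. t \<le> Z idx})"
  have sub: "{Z \<in> space P. psi_c d n W Z} \<subseteq> A \<union> B"
  proof
    fix Z assume Z: "Z \<in> {Z \<in> space P. psi_c d n W Z}"
    then have Zs: "Z \<in> space P" by simp
    from Z have "psi_sum d n W Z \<or> psi_max d n Z" by (simp add: psi_c_def)
    then show "Z \<in> A \<union> B"
    proof
      assume "psi_sum d n W Z"
      then have "W < X Z" unfolding psi_sum_def X_def I_def sqrt_card_I by simp
      then show ?thesis using Zs by (simp add: A_def)
    next
      assume "psi_max d n Z"
      then have "t < Max (Z ` I)" unfolding psi_max_def t_def I_def by simp
      then obtain idx where idx: "idx \<in> I" "t < Z idx"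
        using finI neI by (subst (asm) Max_gr_iff) auto
      then have "Z \<in> {Z \<in> space P. t \<le> Z idx}" using Zs by simp
      then show ?thesis using idx unfolding B_def by blast
    qed
  qed
  have Asets: "A \<in> sets P" unfolding A_def
    by (rule sets_ge[OF distributed_measurable[OF DX]])
  have Bsets_i: "\<And>idx. idx \<in> I \<Longrightarrow> {Z \<in> space P. t \<le> Z idx} \<in> sets P"
    by (rule sets_ge[OF distributed_measurable[OF Dc]])
  have Bsets: "B \<in> sets P" unfolding B_def using finI Bsets_i by auto
  have "measure P {Z \<in> space P. psi_c d n W Z} \<le> measure P (A \<union> B)"
    by (rule finite_measure_mono[OF sub]) (use Asets Bsets in auto)
  also have "\<dots> \<le> measure P A + measure P B"
    by (rule measure_Un_le[OF Asets Bsets])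
  also have "measure P A \<le> 1 / W"
    using tail_upper[OF prob_space_axioms DX W] tail_bound_simple[OF W] unfolding A_def by linarith
  also have "measure P B \<le> 1 / t"
  proof -
    have "measure P B \<le> (\<Sum>idx\<in>I. measure P {Z \<in> space P. t \<le> Z idx})"
      unfolding B_def by (rule measure_UNION_le[OF finI Bsets_i])
    also have "\<dots> \<le> (\<Sum>idx\<in>I. exp (- t\<^sup>2 / 2) / t)"
      by (intro sum_mono tail_upper[OF prob_space_axioms Dc tpos])
    also have "\<dots> = real (card I) * (exp (- t\<^sup>2 / 2) / t)" by simp
    also have "\<dots> = 1 / t"
      unfolding texp using cardge by simp
    finally show ?thesis .
  qed
  finally show ?thesis by (simp add: P_def t_def)
qed

lemma box_eq:
  assumes "\<forall>i<d. S i \<subseteq> {..<n i}"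
  shows "{idx \<in> tensor_idx d n. \<forall>i<d. idx i \<in> S i} = PiE {..<d} S"
  using assms by (auto simp: tensor_idx_def PiE_iff extensional_def)

lemma sum_X:
  assumes "\<forall>i<d. S i \<subseteq> {..<n i} \<and> card (S i) = k i"
  shows "(\<Sum>idx\<in>tensor_idx d n. (if (\<forall>i<d. idx i \<in> S i) then lam' else 0))
        = lam' * (\<Prod>i<d. real (k i))"
proof -
  have "(\<Sum>idx\<in>tensor_idx d n. (if (\<forall>i<d. idx i \<in> S i) then lam' else 0))
      = (\<Sum>idx\<in>{idx \<in> tensor_idx d n. \<forall>i<d. idx i \<in> S i}. lam')"
    by (rule sum.inter_filter[symmetric]) (rule fin_I)
  also have "\<dots> = (\<Sum>idx\<in>PiE {..<d} S. lam')"
    using assms by (subst box_eq) auto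
  also have "\<dots> = lam' * real (card (PiE {..<d} S))" by simp
  also have "card (PiE {..<d} S) = (\<Prod>i<d. k i)"
    using assms by (simp add: card_PiE)
  finally show ?thesis by simp
qed

lemma alt_sum:
  assumes n1: "\<forall>i<d. 1 \<le> n i"
    and X: "X \<in> chc_class d k n lam"
    and Wq: "W < lam * (\<Prod>i<d. real (k i)) / sqrt (\<Prod>i<d. real (n i))"
  shows "measure (gauss_tensor d n) {Z \<in> space (gauss_tensor d n). \<not> psi_c d n W (\<lambda>idx. X idx + Z idx)}
        \<le> 1 / (lam * (\<Prod>i<d. real (k i)) / sqrt (\<Prod>i<d. real (n i)) - W)"
proof -
  define I where "I = tensor_idx d n"
  define P where "P = gauss_tensor d n"
  define q where "q = lam * (\<Prod>i<d. real (k i)) / sqrt (\<Prod>i<d. real (n i))"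
  define K where "K = (\<Prod>i<d. real (k i))"
  define sN where "sN = sqrt (real (card I))"
  have sN_eq: "sqrt (\<Prod>i<d. real (n i)) = sN" by (simp add: sN_def I_def sqrt_card_I)
  have P: "P = PiM I (\<lambda>_. G)" by (simp add: P_def I_def gt_eq)
  have finI: "finite I" by (simp add: I_def fin_I)
  have neI: "I \<noteq> {}" using n1 by (simp add: I_def ne_I)
  have sNpos: "0 < sN" unfolding sN_def using finI neI by (simp add: card_gt_0_iff)
  interpret prob_space P unfolding P_def by (rule prob_P)
  from X obtain S lam' where lam': "lam \<le> lam'" and S: "\<forall>i<d. S i \<subseteq> {..<n i} \<and> card (S i) = k i"
    and Xeq: "X = (\<lambda>idx. if (\<forall>i<d. idx i \<in> S i) then lam' else 0)"
    unfolding chc_class_def by blast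
  have K0: "0 \<le> K" unfolding K_def by (simp add: prod_nonneg)
  have qle: "q \<le> lam' * K / sN"
    unfolding q_def K_def[symmetric] sN_eq using lam' K0 sNpos
    by (simp add: divide_right_mono mult_right_mono)
  have qW: "0 < q - W" using Wq by (simp add: q_def)
  define Xs where "Xs = (\<lambda>Z::(nat \<Rightarrow> nat) \<Rightarrow> real. (\<Sum>idx\<in>I. Z idx) / sN)"
  have DX: "distributed P lborel Xs (\<lambda>x. ennreal (std_normal_density x))"
    unfolding P Xs_def sN_def by (rule sum_dist[OF finI neI])
  have sub: "{Z \<in> space P. \<not> psi_c d n W (\<lambda>idx. X idx + Z idx)} \<subseteq> {Z \<in> space P. Xs Z \<le> - (q - W)}"
  proof safe
    fix Z assume Zs: "Z \<in> space P" and np: "\<not> psi_c d n W (\<lambda>idx. X idx + Z idx)"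
    then have "(\<Sum>idx\<in>I. X idx + Z idx) / sN \<le> W"
      by (simp add: psi_c_def psi_sum_def sN_eq I_def)
    moreover have "(\<Sum>idx\<in>I. X idx + Z idx) = lam' * K + (\<Sum>idx\<in>I. Z idx)"
      unfolding sum.distrib Xeq I_def K_def using sum_X[OF S] by simp
    ultimately have "lam' * K / sN + Xs Z \<le> W"
      unfolding Xs_def by (simp add: add_divide_distrib)
    then show "Xs Z \<le> - (q - W)" using qle by linarith
  qed
  have "measure P {Z \<in> space P. \<not> psi_c d n W (\<lambda>idx. X idx + Z idx)} \<le> measure P {Z \<in> space P. Xs Z \<le> - (q - W)}"
    by (rule finite_measure_mono[OF sub sets_le[OF distributed_measurable[OF DX]]])
  also have "\<dots> \<le> exp (- (q - W)\<^sup>2 / 2) / (q - W)"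
    by (rule tail_lower[OF prob_space_axioms DX qW])
  also have "\<dots> \<le> 1 / (q - W)" by (rule tail_bound_simple[OF qW])
  finally show ?thesis by (simp add: P_def q_def)
qed

lemma alt_max:
  assumes k1: "\<forall>i<d. 1 \<le> k i"
    and X: "X \<in> chc_class d k n lam"
    and tl: "sqrt (2 * (\<Sum>i<d. ln (real (n i)))) < lam"
  shows "measure (gauss_tensor d n) {Z \<in> space (gauss_tensor d n). \<not> psi_c d n W (\<lambda>idx. X idx + Z idx)}
        \<le> 1 / (lam - sqrt (2 * (\<Sum>i<d. ln (real (n i)))))"
proof -
  define I where "I = tensor_idx d n"
  define P where "P = gauss_tensor d n"
  define t where "t = sqrt (2 * (\<Sum>i<d. ln (real (n i))))"
  have P: "P = PiM I (\<lambda>_. G)" by (simp add: P_def I_def gt_eq)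
  have finI: "finite I" by (simp add: I_def fin_I)
  interpret prob_space P unfolding P_def by (rule prob_P)
  from X obtain S lam' where lam': "lam \<le> lam'" and S: "\<forall>i<d. S i \<subseteq> {..<n i} \<and> card (S i) = k i"
    and Xeq: "X = (\<lambda>idx. if (\<forall>i<d. idx i \<in> S i) then lam' else 0)"
    unfolding chc_class_def by blast
  have "\<forall>i\<in>{..<d}. S i \<noteq> {}" using S k1 by (metis card.empty lessThan_iff not_one_le_zero)
  then have "PiE {..<d} S \<noteq> {}" by (simp add: PiE_eq_empty_iff)
  then obtain idx0 where idx0: "idx0 \<in> PiE {..<d} S" by blast
  have idx0I: "idx0 \<in> I" using idx0 S by (auto simp: I_def tensor_idx_def PiE_iff)
  have Xidx0: "X idx0 = lam'" using idx0 by (auto simp: Xeq PiE_iff)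
  have tpos: "0 < lam - t" using tl by (simp add: t_def)
  have D: "distributed P lborel (\<lambda>Z. Z idx0) (\<lambda>x. ennreal (std_normal_density x))"
    unfolding P by (rule comp_dist[OF idx0I])
  have sub: "{Z \<in> space P. \<not> psi_c d n W (\<lambda>idx. X idx + Z idx)} \<subseteq> {Z \<in> space P. Z idx0 \<le> - (lam - t)}"
  proof safe
    fix Z assume Zs: "Z \<in> space P" and np: "\<not> psi_c d n W (\<lambda>idx. X idx + Z idx)"
    then have "Max ((\<lambda>idx. X idx + Z idx) ` I) \<le> t"
      by (simp add: psi_c_def psi_max_def I_def t_def)
    moreover have "X idx0 + Z idx0 \<le> Max ((\<lambda>idx. X idx + Z idx) ` I)"
      using finI idx0I by (intro Max_ge) auto
    ultimately show "Z idx0 \<le> - (lam - t)" using Xidx0 lam' by linarith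
  qed
  have "measure P {Z \<in> space P. \<not> psi_c d n W (\<lambda>idx. X idx + Z idx)} \<le> measure P {Z \<in> space P. Z idx0 \<le> - (lam - t)}"
    by (rule finite_measure_mono[OF sub sets_le[OF distributed_measurable[OF D]]])
  also have "\<dots> \<le> exp (- (lam - t)\<^sup>2 / 2) / (lam - t)"
    by (rule tail_lower[OF prob_space_axioms D tpos])
  also have "\<dots> \<le> 1 / (lam - t)" by (rule tail_bound_simple[OF tpos])
  finally show ?thesis by (simp add: P_def t_def)
qed

lemma risk_le:
  assumes k1: "\<forall>i<d. 1 \<le> k i \<and> k i \<le> n i" and NN: "2 \<le> (\<Prod>i<d. n i)" and W: "0 < W"
    and hA: "\<And>X. X \<in> chc_class d k n lam \<Longrightarrow>
       measure (gauss_tensor d n) {Z \<in> space (gauss_tensor d n). \<not> psi_c d n W (\<lambda>idx. X idx + Z idx)} \<le> A"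
  shows "0 \<le> chc_risk d k n lam W \<and>
         chc_risk d k n lam W \<le> 1 / W + 1 / sqrt (2 * (\<Sum>i<d. ln (real (n i)))) + A"
proof -
  define P where "P = gauss_tensor d n"
  interpret prob_space P unfolding P_def by (rule prob_P)
  define f where "f = (\<lambda>X. measure P {Z \<in> space P. \<not> psi_c d n W (\<lambda>idx. X idx + Z idx)})"
  have n1: "\<forall>i<d. 1 \<le> n i" using k1 by (auto intro: le_trans)
  define X0 where "X0 = (\<lambda>idx::nat\<Rightarrow>nat. if (\<forall>i<d. idx i \<in> {..<k i}) then lam else 0)"
  have X0: "X0 \<in> chc_class d k n lam"
    unfolding chc_class_def X0_def using k1 by (intro CollectI exI[of _ "\<lambda>i. {..<k i}"] exI[of _ lam]) auto
  have ne: "f ` chc_class d k n lam \<noteq> {}" using X0 by auto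
  have bdd: "bdd_above (f ` chc_class d k n lam)"
    by (rule bdd_aboveI[of _ 1]) (auto simp: f_def)
  have supA: "Sup (f ` chc_class d k n lam) \<le> A"
    using ne by (rule cSup_least) (auto simp: f_def P_def hA)
  have sup0: "0 \<le> Sup (f ` chc_class d k n lam)"
  proof -
    have "f X0 \<le> Sup (f ` chc_class d k n lam)" using bdd X0 by (intro cSup_upper) auto
    moreover have "0 \<le> f X0" by (simp add: f_def)
    ultimately show ?thesis by linarith
  qed
  have risk: "chc_risk d k n lam W = measure P {Z \<in> space P. psi_c d n W Z} + Sup (f ` chc_class d k n lam)"
    by (simp add: chc_risk_def f_def P_def)
  have h0: "measure P {Z \<in> space P. psi_c d n W Z} \<le> 1 / W + 1 / sqrt (2 * (\<Sum>i<d. ln (real (n i))))"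
    unfolding P_def by (rule h0_bound[OF n1 NN W])
  have "0 \<le> measure P {Z \<in> space P. psi_c d n W Z}" by simp
  then show ?thesis using risk h0 supA sup0 by linarith
qed



lemma prod_ge_first:
  fixes x :: "nat \<Rightarrow> real"
  assumes "0 < d" "\<forall>i<d. 1 \<le> x i"
  shows "x 0 \<le> (\<Prod>i<d. x i)"
proof -
  have "(\<Prod>i<d. x i) = x 0 * (\<Prod>i\<in>{..<d} - {0}. x i)"
    using assms(1) by (subst prod.remove[of _ 0]) auto
  moreover have "1 \<le> (\<Prod>i\<in>{..<d} - {0}. x i)"
    using assms(2) by (intro prod_ge_1) auto
  moreover have "0 \<le> x 0" using assms by force
  ultimately show ?thesis by (metis mult_left_mono mult.right_neutral)
qed

lemma core:
  fixes n k :: "nat \<Rightarrow> nat \<Rightarrow> nat" and lam W :: "nat \<Rightarrow> real"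
  assumes evk: "eventually (\<lambda>m. \<forall>i<d. 1 \<le> k i m \<and> k i m \<le> n i m) sequentially"
    and NN: "filterlim (\<lambda>m. \<Prod>i<d. real (n i m)) at_top sequentially"
    and Wt: "filterlim W at_top sequentially"
    and cases: "(filterlim (\<lambda>m. lam m * (\<Prod>i<d. real (k i m)) / sqrt (\<Prod>i<d. real (n i m))) at_top sequentially
          \<and> (\<exists>c::real. 0 < c \<and> c < 1 \<and>
               eventually (\<lambda>m. W m \<le> c * (lam m * (\<Prod>i<d. real (k i m)) / sqrt (\<Prod>i<d. real (n i m)))) sequentially))
       \<or> (\<exists>r::real. 1 < r \<and> eventually (\<lambda>m. r * sqrt (2 * (\<Sum>i<d. ln (real (n i m)))) \<le> lam m) sequentially)"
  shows "((\<lambda>m. chc_risk d (\<lambda>i. k i m) (\<lambda>i. n i m) (lam m) (W m)) \<longlongrightarrow> 0) sequentially"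
proof -
  define t where "t = (\<lambda>m. sqrt (2 * (\<Sum>i<d. ln (real (n i m)))))"
  define q where "q = (\<lambda>m. lam m * (\<Prod>i<d. real (k i m)) / sqrt (\<Prod>i<d. real (n i m)))"
  have evn: "eventually (\<lambda>m. \<forall>i<d. 1 \<le> n i m) sequentially"
    using evk by eventually_elim (auto intro: le_trans)
  have NN2: "eventually (\<lambda>m. 2 \<le> (\<Prod>i<d. n i m)) sequentially"
  proof -
    have "eventually (\<lambda>m. 2 \<le> (\<Prod>i<d. real (n i m))) sequentially"
      using NN by (simp add: filterlim_at_top)
    then show ?thesis
    proof eventually_elim
      case (elim m)
      then have "(2::real) \<le> real (\<Prod>i<d. n i m)" by simp
      then show ?case by linarith
    qed
  qed
  have Wpos: "eventually (\<lambda>m. 0 < W m) sequentially"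
    using Wt by (simp add: filterlim_at_top_dense)
  have t_top: "filterlim t at_top sequentially"
  proof -
    have lim: "filterlim (\<lambda>m. sqrt (2 * ln (\<Prod>i<d. real (n i m)))) at_top sequentially"
      by (intro filterlim_compose[OF sqrt_at_top] filterlim_tendsto_pos_mult_at_top[OF tendsto_const]
            filterlim_compose[OF ln_at_top NN]) simp
    have eq: "eventually (\<lambda>m. sqrt (2 * ln (\<Prod>i<d. real (n i m))) = t m) sequentially"
      using evn by eventually_elim (unfold t_def, subst ln_prod, auto)
    show ?thesis by (rule filterlim_at_top_mono[OF lim]) (use eq in \<open>rule eventually_mono, simp\<close>)
  qed
  have invW: "((\<lambda>m. 1 / W m) \<longlongrightarrow> 0) sequentially"
    using tendsto_inverse_0_at_top[OF Wt] by (simp add: inverse_eq_divide)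
  have invt: "((\<lambda>m. 1 / t m) \<longlongrightarrow> 0) sequentially"
    using tendsto_inverse_0_at_top[OF t_top] by (simp add: inverse_eq_divide)
  obtain A where A0: "(A \<longlongrightarrow> 0) sequentially"
    and Abd: "eventually (\<lambda>m. \<forall>X\<in>chc_class d (\<lambda>i. k i m) (\<lambda>i. n i m) (lam m).
       measure (gauss_tensor d (\<lambda>i. n i m)) {Z \<in> space (gauss_tensor d (\<lambda>i. n i m)).
          \<not> psi_c d (\<lambda>i. n i m) (W m) (\<lambda>idx. X idx + Z idx)} \<le> A m) sequentially"
  proof (cases "filterlim q at_top sequentially \<and> (\<exists>c::real. 0 < c \<and> c < 1 \<and> eventually (\<lambda>m. W m \<le> c * q m) sequentially)")
    case True
    then obtain c where q: "filterlim q at_top sequentially" and c: "0 < c" "c < 1"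
      and Wc: "eventually (\<lambda>m. W m \<le> c * q m) sequentially" by blast
    have qpos: "eventually (\<lambda>m. 0 < q m) sequentially" using q by (simp add: filterlim_at_top_dense)
    have qW: "filterlim (\<lambda>m. q m - W m) at_top sequentially"
    proof (rule filterlim_at_top_mono)
      show "filterlim (\<lambda>m. (1 - c) * q m) at_top sequentially"
        using c by (intro filterlim_tendsto_pos_mult_at_top[OF tendsto_const _ q]) simp
      show "eventually (\<lambda>m. (1 - c) * q m \<le> q m - W m) sequentially"
        using Wc by eventually_elim (simp add: algebra_simps)
    qed
    show ?thesis
    proof (rule that[of "\<lambda>m. 1 / (q m - W m)"])
      show "((\<lambda>m. 1 / (q m - W m)) \<longlongrightarrow> 0) sequentially"
        using tendsto_inverse_0_at_top[OF qW] by (simp add: inverse_eq_divide)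
      show "eventually (\<lambda>m. \<forall>X\<in>chc_class d (\<lambda>i. k i m) (\<lambda>i. n i m) (lam m).
         measure (gauss_tensor d (\<lambda>i. n i m)) {Z \<in> space (gauss_tensor d (\<lambda>i. n i m)).
            \<not> psi_c d (\<lambda>i. n i m) (W m) (\<lambda>idx. X idx + Z idx)} \<le> 1 / (q m - W m)) sequentially"
        using evn Wc qpos Wpos
      proof eventually_elim
        case (elim m)
        have "c * q m < q m" using elim c by simp
        then have "W m < q m" using elim by linarith
        then show ?case
          using alt_sum[OF elim(1), of _ "\<lambda>i. k i m" "lam m" "W m"] by (simp add: q_def)
      qed
    qed
  next
    case False
    then obtain r where r: "1 < r" and lr: "eventually (\<lambda>m. r * t m \<le> lam m) sequentially"
      using cases unfolding q_def t_def by auto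
    have lt: "filterlim (\<lambda>m. lam m - t m) at_top sequentially"
    proof (rule filterlim_at_top_mono)
      show "filterlim (\<lambda>m. (r - 1) * t m) at_top sequentially"
        using r by (intro filterlim_tendsto_pos_mult_at_top[OF tendsto_const _ t_top]) simp
      show "eventually (\<lambda>m. (r - 1) * t m \<le> lam m - t m) sequentially"
        using lr by eventually_elim (simp add: algebra_simps)
    qed
    have tpos: "eventually (\<lambda>m. 0 < t m) sequentially" using t_top by (simp add: filterlim_at_top_dense)
    show ?thesis
    proof (rule that[of "\<lambda>m. 1 / (lam m - t m)"])
      show "((\<lambda>m. 1 / (lam m - t m)) \<longlongrightarrow> 0) sequentially"
        using tendsto_inverse_0_at_top[OF lt] by (simp add: inverse_eq_divide)
      show "eventually (\<lambda>m. \<forall>X\<in>chc_class d (\<lambda>i. k i m) (\<lambda>i. n i m) (lam m).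
         measure (gauss_tensor d (\<lambda>i. n i m)) {Z \<in> space (gauss_tensor d (\<lambda>i. n i m)).
            \<not> psi_c d (\<lambda>i. n i m) (W m) (\<lambda>idx. X idx + Z idx)} \<le> 1 / (lam m - t m)) sequentially"
        using evk lr tpos
      proof eventually_elim
        case (elim m)
        have "t m < r * t m" using elim r by simp
        then have "t m < lam m" using elim by linarith
        moreover have "\<forall>i<d. 1 \<le> k i m" using elim by auto
        ultimately show ?case
          using alt_max[of d "\<lambda>i. k i m" _ "\<lambda>i. n i m" "lam m" "W m"] by (simp add: t_def)
      qed
    qed
  qed
  have bound: "eventually (\<lambda>m. 0 \<le> chc_risk d (\<lambda>i. k i m) (\<lambda>i. n i m) (lam m) (W m) \<and>
      chc_risk d (\<lambda>i. k i m) (\<lambda>i. n i m) (lam m) (W m) \<le> 1 / W m + 1 / t m + A m) sequentially"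
    using evk NN2 Wpos Abd
  proof eventually_elim
    case (elim m)
    show ?case unfolding t_def
      by (rule risk_le[OF elim(1) elim(2) elim(3)]) (use elim(4) in blast)
  qed
  have lim: "((\<lambda>m. 1 / W m + 1 / t m + A m) \<longlongrightarrow> 0) sequentially"
    using tendsto_add[OF tendsto_add[OF invW invt] A0] by simp
  show ?thesis
  proof (rule tendsto_sandwich[OF _ _ tendsto_const lim])
    show "eventually (\<lambda>m. 0 \<le> chc_risk d (\<lambda>i. k i m) (\<lambda>i. n i m) (lam m) (W m)) sequentially"
      using bound by (rule eventually_mono) (rule conjunct1)
    show "eventually (\<lambda>m. chc_risk d (\<lambda>i. k i m) (\<lambda>i. n i m) (lam m) (W m) \<le> 1 / W m + 1 / t m + A m) sequentially"
      using bound by (rule eventually_mono) (rule conjunct2)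
  qed
qed



lemma part1:
  fixes n k :: "nat \<Rightarrow> nat \<Rightarrow> nat" and lam W :: "nat \<Rightarrow> real"
  assumes d1: "1 \<le> d" and A1: "regime_A1 d n k" and Wt: "filterlim W at_top sequentially"
    and cs: "(filterlim (\<lambda>m. lam m * (\<Prod>i<d. real (k i m)) / sqrt (\<Prod>i<d. real (n i m))) at_top sequentially
          \<and> (\<exists>c::real. 0 < c \<and> c < 1 \<and>
               (\<forall>m. W m \<le> c * lam m * (\<Prod>i<d. real (k i m)) / sqrt (\<Prod>i<d. real (n i m)))))
       \<or> liminf (\<lambda>m. ereal (lam m / sqrt (2 * (\<Sum>i<d. ln (real (n i m)))))) > 1"
  shows "((\<lambda>m. chc_risk d (\<lambda>i. k i m) (\<lambda>i. n i m) (lam m) (W m)) \<longlongrightarrow> 0) sequentially"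
proof -
  have each: "\<forall>i\<in>{..<d}. eventually (\<lambda>m. 1 \<le> k i m \<and> k i m \<le> n i m) sequentially"
  proof
    fix i assume "i \<in> {..<d}"
    then have i: "i < d" by simp
    have kt: "filterlim (\<lambda>m. real (k i m)) at_top sequentially"
      and nt: "filterlim (\<lambda>m. real (n i m)) at_top sequentially"
      and kn: "((\<lambda>m. real (k i m) / real (n i m)) \<longlongrightarrow> 0) sequentially"
      using A1 i unfolding regime_A1_def by auto
    have e1: "eventually (\<lambda>m. 1 \<le> real (k i m)) sequentially"
      by (rule filterlim_at_top[THEN iffD1, rule_format, OF kt])
    have e2: "eventually (\<lambda>m. 1 \<le> real (n i m)) sequentially"
      by (rule filterlim_at_top[THEN iffD1, rule_format, OF nt])
    have e3: "eventually (\<lambda>m. real (k i m) / real (n i m) < 1) sequentially"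
      by (rule order_tendstoD(2)[OF kn]) simp
    show "eventually (\<lambda>m. 1 \<le> k i m \<and> k i m \<le> n i m) sequentially"
      using e1 e2 e3
    proof eventually_elim
      case (elim m)
      then have "real (k i m) < real (n i m)" by (simp add: divide_less_eq)
      then show ?case using elim by simp
    qed
  qed
  have "eventually (\<lambda>m. \<forall>i\<in>{..<d}. 1 \<le> k i m \<and> k i m \<le> n i m) sequentially"
    by (rule eventually_ball_finite[OF _ each]) simp
  then have evk: "eventually (\<lambda>m. \<forall>i<d. 1 \<le> k i m \<and> k i m \<le> n i m) sequentially"
    by (rule eventually_mono) auto
  have NN: "filterlim (\<lambda>m. \<Prod>i<d. real (n i m)) at_top sequentially"
  proof (rule filterlim_at_top_mono)
    show "filterlim (\<lambda>m. real (n 0 m)) at_top sequentially"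
      using A1 d1 unfolding regime_A1_def by auto
    show "eventually (\<lambda>m. real (n 0 m) \<le> (\<Prod>i<d. real (n i m))) sequentially"
      using evk
    proof eventually_elim
      case (elim m)
      then have "\<forall>i<d. 1 \<le> real (n i m)" by (auto intro: le_trans)
      then show ?case using d1 by (intro prod_ge_first[where x="\<lambda>i. real (n i m)"]) auto
    qed
  qed
  show ?thesis
  proof (rule core[OF evk NN Wt])
    from cs show "(filterlim (\<lambda>m. lam m * (\<Prod>i<d. real (k i m)) / sqrt (\<Prod>i<d. real (n i m))) at_top sequentially
          \<and> (\<exists>c::real. 0 < c \<and> c < 1 \<and>
               eventually (\<lambda>m. W m \<le> c * (lam m * (\<Prod>i<d. real (k i m)) / sqrt (\<Prod>i<d. real (n i m)))) sequentially))
       \<or> (\<exists>r::real. 1 < r \<and> eventually (\<lambda>m. r * sqrt (2 * (\<Sum>i<d. ln (real (n i m)))) \<le> lam m) sequentially)"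
    proof
      assume H: "filterlim (\<lambda>m. lam m * (\<Prod>i<d. real (k i m)) / sqrt (\<Prod>i<d. real (n i m))) at_top sequentially
          \<and> (\<exists>c::real. 0 < c \<and> c < 1 \<and>
               (\<forall>m. W m \<le> c * lam m * (\<Prod>i<d. real (k i m)) / sqrt (\<Prod>i<d. real (n i m))))"
      then obtain c where c: "0 < c" "c < 1"
        and Wc: "\<forall>m. W m \<le> c * lam m * (\<Prod>i<d. real (k i m)) / sqrt (\<Prod>i<d. real (n i m))" by blast
      have "eventually (\<lambda>m. W m \<le> c * (lam m * (\<Prod>i<d. real (k i m)) / sqrt (\<Prod>i<d. real (n i m)))) sequentially"
        using Wc by (simp add: mult.assoc)
      then show ?thesis using H c by blast
    next
      assume H: "liminf (\<lambda>m. ereal (lam m / sqrt (2 * (\<Sum>i<d. ln (real (n i m)))))) > 1"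
      obtain z where z1: "1 < z" and z2: "z < liminf (\<lambda>m. ereal (lam m / sqrt (2 * (\<Sum>i<d. ln (real (n i m))))))"
        using dense[OF H] by blast
      obtain r where zr: "z = ereal r"
        using z1 z2 by (cases z) auto
      have r1: "1 < r" using z1 zr by simp
      have ev: "eventually (\<lambda>m. ereal r < ereal (lam m / sqrt (2 * (\<Sum>i<d. ln (real (n i m)))))) sequentially"
        using less_LiminfD[OF z2] zr by simp
      have "eventually (\<lambda>m. r * sqrt (2 * (\<Sum>i<d. ln (real (n i m)))) \<le> lam m) sequentially"
        using ev
      proof eventually_elim
        case (elim m)
        define t where "t = sqrt (2 * (\<Sum>i<d. ln (real (n i m))))"
        have lt: "r < lam m / t" using elim by (simp add: t_def)
        have ln0: "0 \<le> ln (real j)" for j :: nat by (cases "j = 0") auto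
        have "t \<noteq> 0" using lt r1 by auto
        moreover have "0 \<le> t" unfolding t_def
          using ln0 by (simp add: sum_nonneg)
        ultimately have "0 < t" by simp
        then have "r * t < lam m" using lt by (simp add: less_divide_eq)
        then show ?case by (simp add: t_def)
      qed
      then show ?thesis using r1 by blast
    qed
  qed
qed



lemma asymp_aux: "0 < (g::real) \<Longrightarrow> 0 < D \<Longrightarrow> ((\<lambda>x::real. sqrt (D * x) / exp (g * x)) \<longlongrightarrow> 0) at_top"
  by real_asymp

lemma part2:
  fixes N :: "nat \<Rightarrow> nat" and n :: "nat \<Rightarrow> nat \<Rightarrow> nat" and k :: "nat \<Rightarrow> nat" and lam :: "nat \<Rightarrow> real"
  assumes d1: "1 \<le> d" and A2: "regime_A2 d \<alpha> \<beta> N n k lam"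
    and hb: "\<beta> < max (real d * \<alpha> - real d / 2) 0"
  shows "\<exists>W :: nat \<Rightarrow> real. filterlim W at_top sequentially \<and>
           ((\<lambda>m. chc_risk d (\<lambda>i. k m) (\<lambda>i. n i m) (lam m) (W m)) \<longlongrightarrow> 0) sequentially"
proof -
  have Nt: "filterlim (\<lambda>m. real (N m)) at_top sequentially"
    and lnn: "\<And>i. i < d \<Longrightarrow> ((\<lambda>m. ln (real (n i m)) / ln (real (N m))) \<longlongrightarrow> 1) sequentially"
    and lnk: "((\<lambda>m. ln (real (k m)) / ln (real (N m))) \<longlongrightarrow> \<alpha>) sequentially"
    and lnl: "((\<lambda>m. ln (1 / lam m) / ln (real (N m))) \<longlongrightarrow> \<beta>) sequentially"
    and basic: "\<And>m. 1 \<le> k m \<and> (\<forall>i<d. k m \<le> n i m) \<and> 0 < lam m"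
    using A2 unfolding regime_A2_def by auto
  define L where "L = (\<lambda>m. ln (real (N m)))"
  have lnn': "\<And>i. i < d \<Longrightarrow> ((\<lambda>m. ln (real (n i m)) / L m) \<longlongrightarrow> 1) sequentially"
    using lnn by (simp add: L_def)
  have lnk': "((\<lambda>m. ln (real (k m)) / L m) \<longlongrightarrow> \<alpha>) sequentially"
    using lnk by (simp add: L_def)
  have lnl': "((\<lambda>m. ln (1 / lam m) / L m) \<longlongrightarrow> \<beta>) sequentially"
    using lnl by (simp add: L_def)
  have Lt: "filterlim L at_top sequentially"
    unfolding L_def by (rule filterlim_compose[OF ln_at_top Nt])
  have Lpos: "eventually (\<lambda>m. 0 < L m) sequentially"
    using Lt by (simp add: filterlim_at_top_dense)
  have n1: "\<And>m i. i < d \<Longrightarrow> 1 \<le> n i m" using basic by (meson le_trans)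
  have evk: "eventually (\<lambda>m. \<forall>i<d. 1 \<le> k m \<and> k m \<le> n i m) sequentially"
    using basic by simp
  have n0t: "filterlim (\<lambda>m. real (n 0 m)) at_top sequentially"
  proof -
    have d0: "0 < d" using d1 by simp
    have l1: "filterlim (\<lambda>m. (ln (real (n 0 m)) / L m) * L m) at_top sequentially"
      by (rule filterlim_tendsto_pos_mult_at_top[OF lnn'[OF d0] _ Lt]) simp
    have e1: "eventually (\<lambda>m. (ln (real (n 0 m)) / L m) * L m = ln (real (n 0 m))) sequentially"
      using Lpos by eventually_elim simp
    have lt: "filterlim (\<lambda>m. ln (real (n 0 m))) at_top sequentially"
      by (rule filterlim_at_top_mono[OF l1]) (use e1 in \<open>rule eventually_mono, simp\<close>)
    have "filterlim (\<lambda>m. exp (ln (real (n 0 m)))) at_top sequentially"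
      by (rule filterlim_compose[OF exp_at_top lt])
    moreover have "\<And>m. exp (ln (real (n 0 m))) = real (n 0 m)"
      using n1[OF d0] by (simp add: Suc_le_eq)
    ultimately show ?thesis by simp
  qed
  have NN: "filterlim (\<lambda>m. \<Prod>i<d. real (n i m)) at_top sequentially"
  proof (rule filterlim_at_top_mono[OF n0t])
    show "eventually (\<lambda>m. real (n 0 m) \<le> (\<Prod>i<d. real (n i m))) sequentially"
    proof (rule always_eventually, rule allI)
      fix m
      have "\<forall>i<d. 1 \<le> real (n i m)" using n1 by simp
      then show "real (n 0 m) \<le> (\<Prod>i<d. real (n i m))" using d1
        by (intro prod_ge_first[where x="\<lambda>i. real (n i m)"]) auto
    qed
  qed
  show ?thesis
  proof (cases "\<beta> < 0")
    case True
    define g where "g = - \<beta> / 2"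
    have g: "0 < g" using True by (simp add: g_def)
    have Wt: "filterlim (\<lambda>m. real m) at_top sequentially" by (rule filterlim_real_sequentially)
    have e1: "eventually (\<lambda>m. \<forall>i\<in>{..<d}. ln (real (n i m)) \<le> 2 * L m) sequentially"
    proof (rule eventually_ball_finite, simp, rule ballI)
      fix i assume "i \<in> {..<d}"
      then have "eventually (\<lambda>m. ln (real (n i m)) / L m < 2) sequentially"
        by (intro order_tendstoD(2)[OF lnn']) auto
      then show "eventually (\<lambda>m. ln (real (n i m)) \<le> 2 * L m) sequentially"
        using Lpos by eventually_elim (simp add: divide_less_eq)
    qed
    have e2: "eventually (\<lambda>m. exp (g * L m) < lam m) sequentially"
    proof -
      have "eventually (\<lambda>m. ln (1 / lam m) / L m < \<beta> / 2) sequentially"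
        using True by (intro order_tendstoD(2)[OF lnl']) simp
      then show ?thesis using Lpos
      proof eventually_elim
        case (elim m)
        then have "ln (1 / lam m) < \<beta> / 2 * L m" by (simp add: divide_less_eq)
        moreover have "ln (1 / lam m) = - ln (lam m)" using basic[of m] by (simp add: ln_div)
        ultimately have "g * L m < ln (lam m)" by (simp add: g_def)
        then have "exp (g * L m) < exp (ln (lam m))" by simp
        then show ?case using basic[of m] by simp
      qed
    qed
    have e3: "eventually (\<lambda>m. sqrt ((4 * real d) * L m) / exp (g * L m) < 1 / 2) sequentially"
    proof -
      have "eventually (\<lambda>x. sqrt ((4 * real d) * x) / exp (g * x) < 1 / 2) at_top"
        using d1 g by (intro order_tendstoD(2)[OF asymp_aux]) auto
      then show ?thesis by (rule eventually_compose_filterlim[OF _ Lt])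
    qed
    have "eventually (\<lambda>m. 2 * sqrt (2 * (\<Sum>i<d. ln (real (n i m)))) \<le> lam m) sequentially"
      using e1 e2 e3 Lpos
    proof eventually_elim
      case (elim m)
      have "(\<Sum>i<d. ln (real (n i m))) \<le> (\<Sum>i<d. 2 * L m)"
        using elim(1) by (intro sum_mono) auto
      then have "2 * (\<Sum>i<d. ln (real (n i m))) \<le> (4 * real d) * L m" by (simp add: algebra_simps)
      then have "sqrt (2 * (\<Sum>i<d. ln (real (n i m)))) \<le> sqrt ((4 * real d) * L m)"
        by (rule real_sqrt_le_mono)
      moreover have "2 * sqrt ((4 * real d) * L m) < exp (g * L m)"
        using elim(3) by (simp add: divide_less_eq)
      ultimately show ?case using elim(2) by linarith
    qed
    then have "((\<lambda>m. chc_risk d (\<lambda>i. k m) (\<lambda>i. n i m) (lam m) (real m)) \<longlongrightarrow> 0) sequentially"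
      by (intro core[of d "\<lambda>i m. k m" n, OF evk NN Wt] disjI2 exI[of _ 2]) simp
    then show ?thesis using Wt by blast
  next
    case False
    then have hb': "\<beta> < real d * \<alpha> - real d / 2" using hb by simp
    define q where "q = (\<lambda>m. lam m * (\<Prod>i<d. real (k m)) / sqrt (\<Prod>i<d. real (n i m)))"
    have kpos: "0 < k m" for m using basic[of m] by linarith
    have npos: "0 < n i m" if "i < d" for i m using n1[OF that, of m] by linarith
    have qpos: "\<And>m. 0 < q m"
      unfolding q_def using basic kpos npos by (auto intro!: divide_pos_pos mult_pos_pos prod_pos)
    have lnq: "\<And>m. ln (q m) / L m = - (ln (1 / lam m) / L m) + real d * (ln (real (k m)) / L m)
         - (1/2) * (\<Sum>i<d. ln (real (n i m)) / L m)"
    proof -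
      fix m
      have kp: "0 < real (k m)" using basic[of m] by simp
      have np: "\<And>i. i < d \<Longrightarrow> 0 < real (n i m)" using n1 by (simp add: Suc_le_eq)
      have pp: "0 < (\<Prod>i<d. real (n i m))" using np by (intro prod_pos) auto
      have "ln (q m) = ln (lam m) + ln (\<Prod>i<d. real (k m)) - ln (sqrt (\<Prod>i<d. real (n i m)))"
      proof -
        have lp: "0 < lam m" using basic[of m] by simp
        have kp2: "0 < (\<Prod>i<d. real (k m))" using kp by simp
        have sp: "0 < sqrt (\<Prod>i<d. real (n i m))" using pp by simp
        have a: "ln (lam m * (\<Prod>i<d. real (k m)) / sqrt (\<Prod>i<d. real (n i m)))
              = ln (lam m * (\<Prod>i<d. real (k m))) - ln (sqrt (\<Prod>i<d. real (n i m)))"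
          by (rule ln_divide_pos[OF mult_pos_pos[OF lp kp2] sp])
        have b: "ln (lam m * (\<Prod>i<d. real (k m))) = ln (lam m) + ln (\<Prod>i<d. real (k m))"
          by (rule ln_mult_pos[OF lp kp2])
        show ?thesis unfolding q_def a b ..
      qed
      also have "ln (\<Prod>i<d. real (k m)) = real d * ln (real (k m))"
        using kp by (simp add: ln_realpow)
      also have "ln (sqrt (\<Prod>i<d. real (n i m))) = (1/2) * (\<Sum>i<d. ln (real (n i m)))"
      proof -
        have "ln (\<Prod>i<d. real (n i m)) = (\<Sum>i<d. ln (real (n i m)))"
          using np by (subst ln_prod) auto
        then show ?thesis using pp by (simp add: ln_sqrt)
      qed
      also have "ln (lam m) = - ln (1 / lam m)" using basic[of m] by (simp add: ln_div)
      finally have "ln (q m) = - ln (1 / lam m) + real d * ln (real (k m)) - (1/2) * (\<Sum>i<d. ln (real (n i m)))" .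
      then show "ln (q m) / L m = - (ln (1 / lam m) / L m) + real d * (ln (real (k m)) / L m)
         - (1/2) * (\<Sum>i<d. ln (real (n i m)) / L m)"
        by (simp add: diff_divide_distrib add_divide_distrib sum_divide_distrib mult.commute)
    qed
    define \<delta> where "\<delta> = real d * \<alpha> - real d / 2 - \<beta>"
    have \<delta>: "0 < \<delta>" using hb' by (simp add: \<delta>_def)
    have dv: "- \<beta> + real d * \<alpha> - (1/2) * (\<Sum>i<d. (1::real)) = \<delta>" by (simp add: \<delta>_def)
    have th: "((\<lambda>m. - (ln (1 / lam m) / L m) + real d * (ln (real (k m)) / L m)
         - (1/2) * (\<Sum>i<d. ln (real (n i m)) / L m)) \<longlongrightarrow> - \<beta> + real d * \<alpha> - (1/2) * (\<Sum>i<d. 1)) sequentially"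
      by (intro tendsto_intros lnl' lnk' lnn') auto
    have lim: "((\<lambda>m. ln (q m) / L m) \<longlongrightarrow> \<delta>) sequentially"
      unfolding lnq by (rule th[unfolded dv])
    have l2: "filterlim (\<lambda>m. (ln (q m) / L m) * L m) at_top sequentially"
      by (rule filterlim_tendsto_pos_mult_at_top[OF lim \<delta> Lt])
    have e2: "eventually (\<lambda>m. (ln (q m) / L m) * L m = ln (q m)) sequentially"
      using Lpos by eventually_elim simp
    have lqt: "filterlim (\<lambda>m. ln (q m)) at_top sequentially"
      by (rule filterlim_at_top_mono[OF l2]) (use e2 in \<open>rule eventually_mono, simp\<close>)
    have qt: "filterlim q at_top sequentially"
    proof -
      have "filterlim (\<lambda>m. exp (ln (q m))) at_top sequentially"
        by (rule filterlim_compose[OF exp_at_top lqt])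
      then show ?thesis using qpos by simp
    qed
    define W where "W = (\<lambda>m. q m / 2)"
    have Wt: "filterlim W at_top sequentially"
      unfolding W_def by (intro filterlim_at_top_mono[OF filterlim_tendsto_pos_mult_at_top[OF tendsto_const _ qt, of "1/2"]]) auto
    have "((\<lambda>m. chc_risk d (\<lambda>i. k m) (\<lambda>i. n i m) (lam m) (W m)) \<longlongrightarrow> 0) sequentially"
    proof (intro core[of d "\<lambda>i m. k m" n, OF evk NN Wt] disjI1 conjI exI[of _ "1/2"])
      show "filterlim (\<lambda>m. lam m * (\<Prod>i<d. real (k m)) / sqrt (\<Prod>i<d. real (n i m))) at_top sequentially"
        using qt by (simp add: q_def)
      show "eventually (\<lambda>m. W m \<le> 1/2 * (lam m * (\<Prod>i<d. real (k m)) / sqrt (\<Prod>i<d. real (n i m)))) sequentially"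
        by (simp add: W_def q_def)
    qed auto
    then show ?thesis using Wt by blast
  qed
qed

theorem mainTheorem7:
  fixes d :: nat
  assumes "1 \<le> d"
  shows
   "(\<forall>(n :: nat \<Rightarrow> nat \<Rightarrow> nat) (k :: nat \<Rightarrow> nat \<Rightarrow> nat) (lam :: nat \<Rightarrow> real) (W :: nat \<Rightarrow> real).
       regime_A1 d n k \<and> filterlim W at_top sequentially \<and>
       ( (filterlim (\<lambda>m. lam m * (\<Prod>i<d. real (k i m)) / sqrt (\<Prod>i<d. real (n i m))) at_top sequentially
          \<and> (\<exists>c::real. 0 < c \<and> c < 1 \<and>
               (\<forall>m. W m \<le> c * lam m * (\<Prod>i<d. real (k i m)) / sqrt (\<Prod>i<d. real (n i m)))))
       \<or> liminf (\<lambda>m. ereal (lam m / sqrt (2 * (\<Sum>i<d. ln (real (n i m)))))) > 1 )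
     \<longrightarrow> ((\<lambda>m. chc_risk d (\<lambda>i. k i m) (\<lambda>i. n i m) (lam m) (W m)) \<longlongrightarrow> 0) sequentially)
  \<and>
   (\<forall>(\<alpha>::real) (\<beta>::real) (N :: nat \<Rightarrow> nat) (n :: nat \<Rightarrow> nat \<Rightarrow> nat) (k :: nat \<Rightarrow> nat) (lam :: nat \<Rightarrow> real).
       0 \<le> \<alpha> \<and> \<alpha> \<le> 1 \<and> regime_A2 d \<alpha> \<beta> N n k lam \<and>
       \<beta> < max (real d * \<alpha> - real d / 2) 0
     \<longrightarrow> (\<exists>W :: nat \<Rightarrow> real. filterlim W at_top sequentially \<and>
           ((\<lambda>m. chc_risk d (\<lambda>i. k m) (\<lambda>i. n i m) (lam m) (W m)) \<longlongrightarrow> 0) sequentially))"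
proof (intro conjI allI impI)
  fix n :: "nat \<Rightarrow> nat \<Rightarrow> nat" and k :: "nat \<Rightarrow> nat \<Rightarrow> nat" and lam :: "nat \<Rightarrow> real" and W :: "nat \<Rightarrow> real"
  assume H: "regime_A1 d n k \<and> filterlim W at_top sequentially \<and>
       ( (filterlim (\<lambda>m. lam m * (\<Prod>i<d. real (k i m)) / sqrt (\<Prod>i<d. real (n i m))) at_top sequentially
          \<and> (\<exists>c::real. 0 < c \<and> c < 1 \<and>
               (\<forall>m. W m \<le> c * lam m * (\<Prod>i<d. real (k i m)) / sqrt (\<Prod>i<d. real (n i m)))))
       \<or> liminf (\<lambda>m. ereal (lam m / sqrt (2 * (\<Sum>i<d. ln (real (n i m)))))) > 1 )"
  then have H1: "regime_A1 d n k" and H2: "filterlim W at_top sequentially"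
    and H3: "(filterlim (\<lambda>m. lam m * (\<Prod>i<d. real (k i m)) / sqrt (\<Prod>i<d. real (n i m))) at_top sequentially
          \<and> (\<exists>c::real. 0 < c \<and> c < 1 \<and>
               (\<forall>m. W m \<le> c * lam m * (\<Prod>i<d. real (k i m)) / sqrt (\<Prod>i<d. real (n i m)))))
       \<or> liminf (\<lambda>m. ereal (lam m / sqrt (2 * (\<Sum>i<d. ln (real (n i m)))))) > 1"
    by blast+
  show "((\<lambda>m. chc_risk d (\<lambda>i. k i m) (\<lambda>i. n i m) (lam m) (W m)) \<longlongrightarrow> 0) sequentially"
    by (rule part1[OF assms H1 H2 H3])
next
  fix \<alpha> \<beta> :: real and N :: "nat \<Rightarrow> nat" and n :: "nat \<Rightarrow> nat \<Rightarrow> nat" and k :: "nat \<Rightarrow> nat" and lam :: "nat \<Rightarrow> real"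
  assume H: "0 \<le> \<alpha> \<and> \<alpha> \<le> 1 \<and> regime_A2 d \<alpha> \<beta> N n k lam \<and>
       \<beta> < max (real d * \<alpha> - real d / 2) 0"
  then have H1: "regime_A2 d \<alpha> \<beta> N n k lam" and H2: "\<beta> < max (real d * \<alpha> - real d / 2) 0" by blast+
  show "\<exists>W :: nat \<Rightarrow> real. filterlim W at_top sequentially \<and>
           ((\<lambda>m. chc_risk d (\<lambda>i. k m) (\<lambda>i. n i m) (lam m) (W m)) \<longlongrightarrow> 0) sequentially"
    by (rule part2[OF assms H1 H2])
qed

end
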